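(* Let $G$ be a Klee-graph. For every $v\in V(G)$ there exists a $v$-join of $G$.
   Context: For a cubic graph $G$ and $v\in V(G)$, a $v$-join of $G$ is a spanning subgraph in which $v$ has degree $3$ and every other vertex has degree $1$. For a cubic graph $G$ and $v\in V(G)$ with neighbours $x_1,x_2,x_3$, $G^v$ denotes the cubic graph obtained by replacing $v$ by a triangle: delete $v$, add new vertices $v_1,v_2,v_3$, the edges $v_1v_2,v_2v_3,v_3v_1$, and the edges $v_ix_i$ for $i=1,2,3$. A graph is a Klee-graph if it is $K_4$, or it equals $H^w$ for some Klee-graph $H$ and some $w\in V(H)$. *)

theory Defs
  imports Main
begin

definition graph_deg :: "'a set set \<Rightarrow> 'a \<Rightarrow> nat" where
  "graph_deg E v = card {e \<in> E. v \<in> e}"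

definition cubic_graph :: "'a set \<Rightarrow> 'a set set \<Rightarrow> bool" where
  "cubic_graph V E \<longleftrightarrow> finite V \<and> (\<forall>e\<in>E. e \<subseteq> V \<and> card e = 2)
     \<and> (\<forall>v\<in>V. graph_deg E v = 3)"

definition complete_edges :: "'a set \<Rightarrow> 'a set set" where
  "complete_edges V = {{x, y} | x y. x \<in> V \<and> y \<in> V \<and> x \<noteq> y}"

text \<open>G^w: replace vertex w (neighbours x1,x2,x3) by a triangle on new vertices v1,v2,v3.\<close>
definition triangle_replace_V :: "'a set \<Rightarrow> 'a \<Rightarrow> 'a \<Rightarrow> 'a \<Rightarrow> 'a \<Rightarrow> 'a set" where
  "triangle_replace_V V w v1 v2 v3 = (V - {w}) \<union> {v1, v2, v3}"

definition triangle_replace_E :: "'a set set \<Rightarrow> 'a \<Rightarrow> 'a \<Rightarrow> 'a \<Rightarrow> 'a \<Rightarrow> 'a \<Rightarrow> 'a \<Rightarrow> 'a \<Rightarrow> 'a set set" where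
  "triangle_replace_E E w v1 v2 v3 x1 x2 x3 =
     {e \<in> E. w \<notin> e} \<union> {{v1, v2}, {v2, v3}, {v3, v1}, {v1, x1}, {v2, x2}, {v3, x3}}"

text \<open>Klee-graphs (up to the choice of vertex labels): K4, or H^w for a Klee-graph H.\<close>
inductive klee_graph :: "'a set \<Rightarrow> 'a set set \<Rightarrow> bool" where
  K4: "card V = 4 \<Longrightarrow> klee_graph V (complete_edges V)"
| step: "\<lbrakk> klee_graph V E; w \<in> V;
           {u. {w, u} \<in> E} = {x1, x2, x3}; x1 \<noteq> x2; x2 \<noteq> x3; x1 \<noteq> x3;
           v1 \<noteq> v2; v2 \<noteq> v3; v1 \<noteq> v3;
           v1 \<notin> V - {w}; v2 \<notin> V - {w}; v3 \<notin> V - {w} \<rbrakk>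
        \<Longrightarrow> klee_graph (triangle_replace_V V w v1 v2 v3)
                       (triangle_replace_E E w v1 v2 v3 x1 x2 x3)"

definition v_join :: "'a set \<Rightarrow> 'a set set \<Rightarrow> 'a \<Rightarrow> 'a set set \<Rightarrow> bool" where
  "v_join V E v F \<longleftrightarrow> F \<subseteq> E \<and> graph_deg F v = 3 \<and> (\<forall>u \<in> V - {v}. graph_deg F u = 1)"

end

theory Submission
  imports Defs
begin

definition wfg :: "'a set \<Rightarrow> 'a set set \<Rightarrow> bool" where
  "wfg V E \<longleftrightarrow> finite V \<and> (\<forall>e\<in>E. e \<subseteq> V \<and> card e = 2)"

definition pm :: "'a set \<Rightarrow> 'a set set \<Rightarrow> 'a set set \<Rightarrow> bool" where
  "pm V E M \<longleftrightarrow> M \<subseteq> E \<and> (\<forall>u\<in>V. graph_deg M u = 1)"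

definition stepok where
  "stepok V E w v1 v2 v3 x1 x2 x3 \<longleftrightarrow> wfg V E \<and> w \<in> V \<and> {u. {w, u} \<in> E} = {x1, x2, x3}
    \<and> x1 \<noteq> x2 \<and> x2 \<noteq> x3 \<and> x1 \<noteq> x3 \<and> v1 \<noteq> v2 \<and> v2 \<noteq> v3 \<and> v1 \<noteq> v3
    \<and> v1 \<notin> V - {w} \<and> v2 \<notin> V - {w} \<and> v3 \<notin> V - {w}"

lemma deg_empty[simp]: "graph_deg {} u = 0"
  by (simp add: graph_deg_def)

lemma deg_insert[simp]: "finite A \<Longrightarrow> graph_deg (insert e A) u =
   (if u \<in> e \<and> e \<notin> A then Suc (graph_deg A u) else graph_deg A u)"
proof -
  assume f: "finite A"
  have fA: "finite {x\<in>A. u \<in> x}" using f by simp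
  show ?thesis
  proof (cases "u \<in> e")
    case True
    then have "{x \<in> insert e A. u \<in> x} = insert e {x\<in>A. u \<in> x}" by auto
    then show ?thesis unfolding graph_deg_def using fA True by (simp add: card_insert_if)
  next
    case False
    then have "{x \<in> insert e A. u \<in> x} = {x\<in>A. u \<in> x}" by auto
    then show ?thesis unfolding graph_deg_def using False by simp
  qed
qed

lemma wfg_finE: "wfg V E \<Longrightarrow> finite E"
proof -
  assume a: "wfg V E"
  then have "E \<subseteq> Pow V" "finite V" unfolding wfg_def by auto
  then show "finite E" using finite_subset by blast
qed

lemma stepok_rot: "stepok V E w v1 v2 v3 x1 x2 x3 \<Longrightarrow> stepok V E w v2 v3 v1 x2 x3 x1"
  unfolding stepok_def by (auto simp: insert_commute)

lemma TV_rot: "triangle_replace_V V w v2 v3 v1 = triangle_replace_V V w v1 v2 v3"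
  by (auto simp: triangle_replace_V_def)

lemma TE_rot: "triangle_replace_E E w v2 v3 v1 x2 x3 x1 = triangle_replace_E E w v1 v2 v3 x1 x2 x3"
  by (auto simp: triangle_replace_E_def insert_commute)

lemma stepok_facts:
  assumes "stepok V E w v1 v2 v3 x1 x2 x3"
  shows "x1 \<in> V" "x2 \<in> V" "x3 \<in> V" "x1 \<noteq> w" "x2 \<noteq> w" "x3 \<noteq> w"
    "{w,x1} \<in> E" "{w,x2} \<in> E" "{w,x3} \<in> E"
proof -
  have n: "{u. {w, u} \<in> E} = {x1, x2, x3}" and wf: "wfg V E"
    using assms by (auto simp: stepok_def)
  show e1: "{w,x1} \<in> E" and e2: "{w,x2} \<in> E" and e3: "{w,x3} \<in> E"
    using n by (metis insertCI mem_Collect_eq)+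
  have c: "\<And>y. {w,y} \<in> E \<Longrightarrow> y \<in> V \<and> y \<noteq> w"
  proof -
    fix y assume "{w,y} \<in> E"
    then have "{w,y} \<subseteq> V" "card {w,y} = 2" using wf by (auto simp: wfg_def)
    then show "y \<in> V \<and> y \<noteq> w" by (cases "y = w") auto
  qed
  show "x1 \<in> V" "x2 \<in> V" "x3 \<in> V" "x1 \<noteq> w" "x2 \<noteq> w" "x3 \<noteq> w"
    using c[OF e1] c[OF e2] c[OF e3] by simp_all
qed

lemma L0:
  assumes wf: "wfg V E" and F: "F \<subseteq> E" and wx: "{w,x1} \<in> F" and dw: "graph_deg F w = 1"
    and fT: "finite T" and Tn: "\<forall>t\<in>T. t \<inter> Vn \<noteq> {}" and Vn: "Vn \<inter> (V - {w}) = {}"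
  shows "graph_deg ((F - {{w,x1}}) \<union> T) u = graph_deg F u - (if u \<in> {w,x1} then 1 else 0) + graph_deg T u"
    and "u \<in> Vn \<Longrightarrow> graph_deg F u - (if u \<in> {w,x1} then 1 else 0) = 0"
    and "e \<in> F - {{w,x1}} \<Longrightarrow> w \<notin> e"
proof -
  have finF: "finite F" using F wfg_finE[OF wf] finite_subset by blast
  have "{e\<in>F. w \<in> e} = {{w,x1}}"
  proof -
    have "card {e\<in>F. w \<in> e} = 1" using dw by (simp add: graph_deg_def)
    then obtain a where "{e\<in>F. w \<in> e} = {a}" by (auto simp: card_1_singleton_iff)
    moreover have "{w,x1} \<in> {e\<in>F. w \<in> e}" using wx by auto
    ultimately show ?thesis by auto
  qed
  then have F0w: "\<forall>e\<in>F - {{w,x1}}. w \<notin> e" by blast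
  then show "e \<in> F - {{w,x1}} \<Longrightarrow> w \<notin> e" by blast
  have F0V: "\<forall>e\<in>F - {{w,x1}}. e \<subseteq> V - {w}"
  proof
    fix e assume e: "e \<in> F - {{w,x1}}"
    then have "e \<subseteq> V" using F wf unfolding wfg_def by blast
    then show "e \<subseteq> V - {w}" using F0w e by blast
  qed
  have disj: "(F - {{w,x1}}) \<inter> T = {}"
  proof (rule ccontr)
    assume "(F - {{w,x1}}) \<inter> T \<noteq> {}"
    then obtain t where t1: "t \<in> F - {{w,x1}}" and t2: "t \<in> T" by blast
    have a: "t \<subseteq> V - {w}" using F0V t1 by simp
    have b: "t \<inter> Vn \<noteq> {}" using Tn t2 by simp
    from a b Vn show False by blast
  qed
  have D0: "graph_deg (F - {{w,x1}}) u = graph_deg F u - (if u \<in> {w,x1} then 1 else 0)"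
  proof -
    have "{e \<in> F - {{w,x1}}. u \<in> e} = {e\<in>F. u \<in> e} - {{w,x1}}" by auto
    then show ?thesis unfolding graph_deg_def using wx
      by (simp add: card_Diff_singleton_if finF)
  qed
  have eqU: "{e \<in> (F - {{w,x1}}) \<union> T. u \<in> e} = {e \<in> F - {{w,x1}}. u \<in> e} \<union> {e\<in>T. u \<in> e}" by auto
  have cu: "card ({e \<in> F - {{w,x1}}. u \<in> e} \<union> {e\<in>T. u \<in> e}) = card {e \<in> F - {{w,x1}}. u \<in> e} + card {e\<in>T. u \<in> e}"
    by (rule card_Un_disjoint) (use disj finF fT in auto)
  have "graph_deg ((F - {{w,x1}}) \<union> T) u = graph_deg (F - {{w,x1}}) u + graph_deg T u"
    unfolding graph_deg_def eqU cu ..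
  then show "graph_deg ((F - {{w,x1}}) \<union> T) u = graph_deg F u - (if u \<in> {w,x1} then 1 else 0) + graph_deg T u"
    using D0 by simp
  show "u \<in> Vn \<Longrightarrow> graph_deg F u - (if u \<in> {w,x1} then 1 else 0) = 0"
  proof -
    assume u: "u \<in> Vn"
    have "{e \<in> F - {{w,x1}}. u \<in> e} = {}"
    proof (rule ccontr)
      assume "{e \<in> F - {{w,x1}}. u \<in> e} \<noteq> {}"
      then obtain e where e1: "e \<in> F - {{w,x1}}" and e2: "u \<in> e" by blast
      have "e \<subseteq> V - {w}" using F0V e1 by simp
      then show False using e2 u Vn by blast
    qed
    then have g0: "graph_deg (F - {{w,x1}}) u = 0" by (metis card.empty graph_deg_def)
    show ?thesis using D0 g0 by metis
  qed
qed


lemma stepok_more: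
  assumes st: "stepok V E w v1 v2 v3 x1 x2 x3"
  shows "v1 \<noteq> x1" "v1 \<noteq> x2" "v1 \<noteq> x3" "v2 \<noteq> x1" "v2 \<noteq> x2" "v2 \<noteq> x3"
    "v3 \<noteq> x1" "v3 \<noteq> x2" "v3 \<noteq> x3" "{v1,v2,v3} \<inter> (V - {w}) = {}"
    "v1 \<noteq> v2" "v2 \<noteq> v3" "v1 \<noteq> v3" "x1 \<noteq> x2" "x2 \<noteq> x3" "x1 \<noteq> x3"
    "v1 \<notin> V - {w}" "v2 \<notin> V - {w}" "v3 \<notin> V - {w}" "wfg V E" "w \<in> V"
proof -
  have a: "x1 \<in> V - {w}" "x2 \<in> V - {w}" "x3 \<in> V - {w}" using stepok_facts[OF st] by auto
  have b: "v1 \<notin> V - {w}" "v2 \<notin> V - {w}" "v3 \<notin> V - {w}" using st by (auto simp: stepok_def)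
  from a b show "v1 \<noteq> x1" "v1 \<noteq> x2" "v1 \<noteq> x3" "v2 \<noteq> x1" "v2 \<noteq> x2" "v2 \<noteq> x3"
    "v3 \<noteq> x1" "v3 \<noteq> x2" "v3 \<noteq> x3" by metis+
  from b show "{v1,v2,v3} \<inter> (V - {w}) = {}" by blast
  from b show "v1 \<notin> V - {w}" "v2 \<notin> V - {w}" "v3 \<notin> V - {w}" by simp_all
  show "v1 \<noteq> v2" "v2 \<noteq> v3" "v1 \<noteq> v3" "x1 \<noteq> x2" "x2 \<noteq> x3" "x1 \<noteq> x3" "wfg V E" "w \<in> V"
    using st by (simp_all add: stepok_def)
qed

lemma S1:
  assumes st: "stepok V E w v1 v2 v3 x1 x2 x3" and F: "F \<subseteq> E" and wx: "{w,x1} \<in> F"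
    and dw: "graph_deg F w = 1"
  shows "\<exists>F'. F' \<subseteq> triangle_replace_E E w v1 v2 v3 x1 x2 x3 \<and> (\<forall>u\<in>V-{w}. graph_deg F' u = graph_deg F u)
     \<and> (\<forall>u\<in>{v1,v2,v3}. graph_deg F' u = 1) \<and> (\<forall>e\<in>F. w \<notin> e \<longrightarrow> e \<in> F') \<and> {v1,x1} \<in> F' \<and> {v2,v3} \<in> F'"
proof -
  note m = stepok_more[OF st]
  have wf: "wfg V E" using m by simp
  define T where "T = {{v1,x1},{v2,v3}}"
  define F' where "F' = (F - {{w,x1}}) \<union> T"
  have fT: "finite T" unfolding T_def by simp
  have Tn: "\<forall>t\<in>T. t \<inter> {v1,v2,v3} \<noteq> {}" unfolding T_def by auto
  note L = L0[OF wf F wx dw fT Tn m(10)]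
  have finF: "finite F" using F wfg_finE[OF wf] finite_subset by blast
  have sub: "F' \<subseteq> triangle_replace_E E w v1 v2 v3 x1 x2 x3"
  proof
    fix e assume "e \<in> F'"
    then consider "e \<in> F - {{w,x1}}" | "e \<in> T" unfolding F'_def by blast
    then show "e \<in> triangle_replace_E E w v1 v2 v3 x1 x2 x3"
    proof cases
      case 1
      then have "w \<notin> e" by (rule L(3))
      then show ?thesis using 1 F unfolding triangle_replace_E_def by blast
    next
      case 2
      then show ?thesis unfolding triangle_replace_E_def T_def by blast
    qed
  qed
  have d1: "\<forall>u\<in>V-{w}. graph_deg F' u = graph_deg F u"
  proof
    fix u assume u: "u \<in> V - {w}"
    have nv: "u \<noteq> v1" "u \<noteq> v2" "u \<noteq> v3" using u m by auto
    have dT: "graph_deg T u = (if u = x1 then 1 else 0)"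
      unfolding T_def using nv m by auto
    have pos: "graph_deg F x1 \<ge> 1"
    proof -
      have "{w,x1} \<in> {e\<in>F. x1 \<in> e}" using wx by auto
      moreover have "finite {e\<in>F. x1 \<in> e}" using finF by simp
      ultimately show ?thesis unfolding graph_deg_def
        by (metis One_nat_def Suc_leI card_gt_0_iff empty_iff)
    qed
    show "graph_deg F' u = graph_deg F u"
      unfolding F'_def L(1) dT using u pos by auto
  qed
  have d2: "\<forall>u\<in>{v1,v2,v3}. graph_deg F' u = 1"
  proof
    fix u assume u: "u \<in> {v1,v2,v3}"
    have z: "graph_deg F u - (if u \<in> {w,x1} then 1 else 0) = 0" using L(2)[OF u] .
    have "graph_deg T u = 1" unfolding T_def using u m by (auto simp: doubleton_eq_iff)
    then show "graph_deg F' u = 1" unfolding F'_def L(1) z by simp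
  qed
  have d3: "\<forall>e\<in>F. w \<notin> e \<longrightarrow> e \<in> F'" unfolding F'_def by auto
  show ?thesis
    by (rule exI[of _ F'], intro conjI sub d1 d2 d3) (auto simp: F'_def T_def)
qed


lemma S1rot:
  assumes st: "stepok V E w v1 v2 v3 x1 x2 x3" and F: "F \<subseteq> E" and wx: "{w,x2} \<in> F"
    and dw: "graph_deg F w = 1"
  shows "\<exists>F'. F' \<subseteq> triangle_replace_E E w v1 v2 v3 x1 x2 x3 \<and> (\<forall>u\<in>V-{w}. graph_deg F' u = graph_deg F u)
     \<and> (\<forall>u\<in>{v1,v2,v3}. graph_deg F' u = 1) \<and> (\<forall>e\<in>F. w \<notin> e \<longrightarrow> e \<in> F') \<and> {v2,x2} \<in> F' \<and> {v3,v1} \<in> F'"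
proof -
  have st': "stepok V E w v2 v3 v1 x2 x3 x1" by (rule stepok_rot[OF st])
  have e: "{v2,v3,v1} = {v1,v2,v3}" by (simp add: insert_commute)
  obtain F' where f1: "F' \<subseteq> triangle_replace_E E w v2 v3 v1 x2 x3 x1" and f2: "\<forall>u\<in>V-{w}. graph_deg F' u = graph_deg F u"
     and f3: "\<forall>u\<in>{v2,v3,v1}. graph_deg F' u = 1" and f4: "\<forall>e\<in>F. w \<notin> e \<longrightarrow> e \<in> F'" and f5: "{v2,x2} \<in> F'" and f6: "{v3,v1} \<in> F'"
    using S1[OF st' F wx dw] by blast
  note f1' = f1[unfolded TE_rot[of E w v2 v3 v1 x2 x3 x1]] and f3' = f3[unfolded e]
  show ?thesis by (rule exI[of _ F'], intro conjI, fact f1', fact f2, fact f3', fact f4, fact f5, fact f6)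
qed

lemma S1rot2:
  assumes st: "stepok V E w v1 v2 v3 x1 x2 x3" and F: "F \<subseteq> E" and wx: "{w,x3} \<in> F"
    and dw: "graph_deg F w = 1"
  shows "\<exists>F'. F' \<subseteq> triangle_replace_E E w v1 v2 v3 x1 x2 x3 \<and> (\<forall>u\<in>V-{w}. graph_deg F' u = graph_deg F u)
     \<and> (\<forall>u\<in>{v1,v2,v3}. graph_deg F' u = 1) \<and> (\<forall>e\<in>F. w \<notin> e \<longrightarrow> e \<in> F') \<and> {v3,x3} \<in> F' \<and> {v1,v2} \<in> F'"
proof -
  have st': "stepok V E w v3 v1 v2 x3 x1 x2" by (rule stepok_rot[OF stepok_rot[OF st]])
  have e: "{v3,v1,v2} = {v1,v2,v3}" by (simp add: insert_commute)
  have te: "triangle_replace_E E w v3 v1 v2 x3 x1 x2 = triangle_replace_E E w v1 v2 v3 x1 x2 x3"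
    using TE_rot[of E w v2 v3 v1 x2 x3 x1] TE_rot[of E w v1 v2 v3 x1 x2 x3] by simp
  obtain F' where f1: "F' \<subseteq> triangle_replace_E E w v3 v1 v2 x3 x1 x2" and f2: "\<forall>u\<in>V-{w}. graph_deg F' u = graph_deg F u"
     and f3: "\<forall>u\<in>{v3,v1,v2}. graph_deg F' u = 1" and f4: "\<forall>e\<in>F. w \<notin> e \<longrightarrow> e \<in> F'" and f5: "{v3,x3} \<in> F'" and f6: "{v1,v2} \<in> F'"
    using S1[OF st' F wx dw] by blast
  note f1' = f1[unfolded te] and f3' = f3[unfolded e]
  show ?thesis by (rule exI[of _ F'], intro conjI, fact f1', fact f2, fact f3', fact f4, fact f5, fact f6)
qed

lemma S1gen:
  assumes st: "stepok V E w v1 v2 v3 x1 x2 x3" and F: "F \<subseteq> E" and dw: "graph_deg F w = 1"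
  shows "\<exists>F'. F' \<subseteq> triangle_replace_E E w v1 v2 v3 x1 x2 x3 \<and> (\<forall>u\<in>V-{w}. graph_deg F' u = graph_deg F u)
     \<and> (\<forall>u\<in>{v1,v2,v3}. graph_deg F' u = 1) \<and> (\<forall>e\<in>F. w \<notin> e \<longrightarrow> e \<in> F')"
proof -
  have wf: "wfg V E" and nb: "{u. {w, u} \<in> E} = {x1, x2, x3}" using st by (auto simp: stepok_def)
  have "card {e\<in>F. w \<in> e} = 1" using dw by (simp add: graph_deg_def)
  then obtain e0 where e0s: "{e\<in>F. w \<in> e} = {e0}" by (auto simp: card_1_singleton_iff)
  then have e0: "e0 \<in> F" "w \<in> e0" by auto
  then have "card e0 = 2" using F wf by (auto simp: wfg_def)
  then obtain a b where ab: "e0 = {a,b}" "a \<noteq> b" by (auto simp: card_2_iff)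
  obtain y where y: "e0 = {w,y}" using ab e0(2) by (metis insert_commute insertE singletonD)
  have "y \<in> {x1,x2,x3}" using nb y e0(1) F by blast
  then consider "y = x1" | "y = x2" | "y = x3" by blast
  then show ?thesis
  proof cases
    case 1
    show ?thesis using S1[OF st F _ dw] e0(1) y 1 by blast
  next
    case 2
    show ?thesis using S1rot[OF st F _ dw] e0(1) y 2 by blast
  next
    case 3
    show ?thesis using S1rot2[OF st F _ dw] e0(1) y 3 by blast
  qed
qed

lemma TV_eq: "triangle_replace_V V w v1 v2 v3 = (V - {w}) \<union> {v1,v2,v3}"
  by (simp add: triangle_replace_V_def)

lemma pm_step:
  assumes st: "stepok V E w v1 v2 v3 x1 x2 x3" and M: "pm V E M" and wM: "{w,x1} \<in> M"
  shows "\<exists>M'. pm (triangle_replace_V V w v1 v2 v3) (triangle_replace_E E w v1 v2 v3 x1 x2 x3) M'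
     \<and> {v1,x1} \<in> M' \<and> {v2,v3} \<in> M'"
proof -
  have MS: "M \<subseteq> E" and dM: "\<forall>u\<in>V. graph_deg M u = 1" using M by (auto simp: pm_def)
  have "w \<in> V" using st by (simp add: stepok_def)
  then have dw: "graph_deg M w = 1" using dM by simp
  obtain F' where F': "F' \<subseteq> triangle_replace_E E w v1 v2 v3 x1 x2 x3" "\<forall>u\<in>V-{w}. graph_deg F' u = graph_deg M u"
    "\<forall>u\<in>{v1,v2,v3}. graph_deg F' u = 1" "{v1,x1} \<in> F'" "{v2,v3} \<in> F'"
    using S1[OF st MS wM dw] by blast
  have "pm (triangle_replace_V V w v1 v2 v3) (triangle_replace_E E w v1 v2 v3 x1 x2 x3) F'"
    unfolding pm_def TV_eq using F' dM by auto
  then show ?thesis using F' by blast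
qed

lemma S2:
  assumes st: "stepok V E w v1 v2 v3 x1 x2 x3" and M: "pm V E M" and wx: "{w,x1} \<in> M"
  shows "\<exists>F. v_join (triangle_replace_V V w v1 v2 v3) (triangle_replace_E E w v1 v2 v3 x1 x2 x3) v1 F"
proof -
  note m = stepok_more[OF st]
  have wf: "wfg V E" using m by simp
  have F: "M \<subseteq> E" and dM: "\<forall>u\<in>V. graph_deg M u = 1" using M by (auto simp: pm_def)
  have dw: "graph_deg M w = 1" using dM m by simp
  define T where "T = {{v1,x1},{v1,v2},{v3,v1}}"
  define F' where "F' = (M - {{w,x1}}) \<union> T"
  have fT: "finite T" unfolding T_def by simp
  have Tn: "\<forall>t\<in>T. t \<inter> {v1,v2,v3} \<noteq> {}" unfolding T_def by auto
  note L = L0[OF wf F wx dw fT Tn m(10)]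
  have sub: "F' \<subseteq> triangle_replace_E E w v1 v2 v3 x1 x2 x3"
  proof
    fix e assume "e \<in> F'"
    then consider "e \<in> M - {{w,x1}}" | "e \<in> T" unfolding F'_def by blast
    then show "e \<in> triangle_replace_E E w v1 v2 v3 x1 x2 x3"
    proof cases
      case 1
      then have "w \<notin> e" by (rule L(3))
      then show ?thesis using 1 F unfolding triangle_replace_E_def by blast
    next
      case 2
      then show ?thesis unfolding triangle_replace_E_def T_def by blast
    qed
  qed
  have d1: "\<forall>u\<in>V-{w}. graph_deg F' u = 1"
  proof
    fix u assume u: "u \<in> V - {w}"
    have nv: "u \<noteq> v1" "u \<noteq> v2" "u \<noteq> v3" using u m by auto
    have dT: "graph_deg T u = (if u = x1 then 1 else 0)"
      unfolding T_def using nv m by auto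
    have "graph_deg M u = 1" using u dM by simp
    then show "graph_deg F' u = 1"
      unfolding F'_def L(1) dT using u by auto
  qed
  have d2: "\<forall>u\<in>{v2,v3}. graph_deg F' u = 1"
  proof
    fix u assume u: "u \<in> {v2,v3}"
    then have u': "u \<in> {v1,v2,v3}" by auto
    have z: "graph_deg M u - (if u \<in> {w,x1} then 1 else 0) = 0" using L(2)[OF u'] .
    have "graph_deg T u = 1" unfolding T_def using u m by (auto simp: doubleton_eq_iff)
    then show "graph_deg F' u = 1" unfolding F'_def L(1) z by simp
  qed
  have d3: "graph_deg F' v1 = 3"
  proof -
    have z: "graph_deg M v1 - (if v1 \<in> {w,x1} then 1 else 0) = 0" using L(2)[of v1] by simp
    have "graph_deg T v1 = 3" unfolding T_def using m by (auto simp: doubleton_eq_iff)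
    then show ?thesis unfolding F'_def L(1) z by simp
  qed
  have "v_join (triangle_replace_V V w v1 v2 v3) (triangle_replace_E E w v1 v2 v3 x1 x2 x3) v1 F'"
    unfolding v_join_def TV_eq using sub d1 d2 d3 by auto
  then show ?thesis by blast
qed


lemma K4_inv:
  assumes c: "card V = 4"
  shows "wfg V (complete_edges V) \<and> (\<forall>v\<in>V. \<exists>F. v_join V (complete_edges V) v F)
     \<and> (\<forall>e\<in>complete_edges V. \<exists>M. pm V (complete_edges V) M \<and> e \<in> M)"
proof (intro conjI ballI)
  have fV: "finite V" using c by (metis card.infinite zero_neq_numeral)
  show "wfg V (complete_edges V)" unfolding wfg_def complete_edges_def using fV by auto
next
  fix v assume v: "v \<in> V"
  have fV: "finite V" using c by (metis card.infinite zero_neq_numeral)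
  have "card (V - {v}) = 3" using c v fV by simp
  then obtain p q r where pqr: "V - {v} = {p,q,r}" "p \<noteq> q" "p \<noteq> r" "q \<noteq> r"
    by (auto simp: card_3_iff)
  have ne: "p \<noteq> v" "q \<noteq> v" "r \<noteq> v" "p \<in> V" "q \<in> V" "r \<in> V" using pqr(1) by blast+
  define F where "F = {{v,p},{v,q},{v,r}}"
  have "F \<subseteq> complete_edges V" unfolding F_def complete_edges_def using ne v by blast
  moreover have "graph_deg F v = 3" unfolding F_def using pqr ne by (auto simp: doubleton_eq_iff)
  moreover have "\<forall>u\<in>V - {v}. graph_deg F u = 1"
  proof
    fix u assume "u \<in> V - {v}"
    then have "u = p \<or> u = q \<or> u = r" "u \<noteq> v" using pqr(1) by auto
    then show "graph_deg F u = 1" unfolding F_def using pqr ne by (auto simp: doubleton_eq_iff)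
  qed
  ultimately show "\<exists>F. v_join V (complete_edges V) v F" unfolding v_join_def by blast
next
  fix e assume e: "e \<in> complete_edges V"
  have fV: "finite V" using c by (metis card.infinite zero_neq_numeral)
  obtain x y where xy: "e = {x,y}" "x \<in> V" "y \<in> V" "x \<noteq> y" using e unfolding complete_edges_def by blast
  have "card (V - {x,y}) = 2" using c xy fV by (simp add: card_Diff_subset)
  then obtain p q where pq: "V - {x,y} = {p,q}" "p \<noteq> q" by (auto simp: card_2_iff)
  have ne: "p \<noteq> x" "q \<noteq> x" "p \<noteq> y" "q \<noteq> y" "p \<in> V" "q \<in> V" using pq(1) by blast+
  define M where "M = {{x,y},{p,q}}"
  have "M \<subseteq> complete_edges V" unfolding M_def complete_edges_def using ne xy pq by blast
  moreover have "\<forall>u\<in>V. graph_deg M u = 1"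
  proof
    fix u assume "u \<in> V"
    then have "u = x \<or> u = y \<or> u = p \<or> u = q" using pq(1) by auto
    then show "graph_deg M u = 1" unfolding M_def using pq ne xy by (auto simp: doubleton_eq_iff)
  qed
  ultimately show "\<exists>M. pm V (complete_edges V) M \<and> e \<in> M" unfolding pm_def M_def xy by blast
qed

lemma step_inv:
  assumes st: "stepok V E w v1 v2 v3 x1 x2 x3"
    and IV: "\<forall>v\<in>V. \<exists>F. v_join V E v F"
    and IE: "\<forall>e\<in>E. \<exists>M. pm V E M \<and> e \<in> M"
  shows "wfg (triangle_replace_V V w v1 v2 v3) (triangle_replace_E E w v1 v2 v3 x1 x2 x3)
     \<and> (\<forall>v\<in>triangle_replace_V V w v1 v2 v3. \<exists>F. v_join (triangle_replace_V V w v1 v2 v3) (triangle_replace_E E w v1 v2 v3 x1 x2 x3) v F)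
     \<and> (\<forall>e\<in>triangle_replace_E E w v1 v2 v3 x1 x2 x3. \<exists>M. pm (triangle_replace_V V w v1 v2 v3) (triangle_replace_E E w v1 v2 v3 x1 x2 x3) M \<and> e \<in> M)"
proof -
  note m = stepok_more[OF st]
  note fa = stepok_facts[OF st]
  have st1: "stepok V E w v2 v3 v1 x2 x3 x1" by (rule stepok_rot[OF st])
  have st2: "stepok V E w v3 v1 v2 x3 x1 x2" by (rule stepok_rot[OF st1])
  have tv1: "triangle_replace_V V w v2 v3 v1 = triangle_replace_V V w v1 v2 v3" by (rule TV_rot)
  have tv2: "triangle_replace_V V w v3 v1 v2 = triangle_replace_V V w v1 v2 v3"
    by (auto simp: triangle_replace_V_def)
  have te1: "triangle_replace_E E w v2 v3 v1 x2 x3 x1 = triangle_replace_E E w v1 v2 v3 x1 x2 x3" by (rule TE_rot)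
  have te2: "triangle_replace_E E w v3 v1 v2 x3 x1 x2 = triangle_replace_E E w v1 v2 v3 x1 x2 x3"
    by (auto simp: triangle_replace_E_def)
  let ?V' = "triangle_replace_V V w v1 v2 v3"
  let ?E' = "triangle_replace_E E w v1 v2 v3 x1 x2 x3"
  have wf: "wfg V E" using m by simp
  have A: "wfg ?V' ?E'"
    unfolding wfg_def
  proof (rule conjI)
    show "finite ?V'" using wf by (simp add: wfg_def triangle_replace_V_def)
  next
    show "\<forall>e\<in>?E'. e \<subseteq> ?V' \<and> card e = 2"
    proof
    fix e assume "e \<in> ?E'"
    then consider "e \<in> E" "w \<notin> e" | "e = {v1,v2}" | "e = {v2,v3}" | "e = {v3,v1}" | "e = {v1,x1}"
      | "e = {v2,x2}" | "e = {v3,x3}" unfolding triangle_replace_E_def by (elim UnE CollectE insertE emptyE) auto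
    note cs = this
    show "e \<subseteq> ?V' \<and> card e = 2"
    proof -
    have h: "\<And>a b. a \<in> ?V' \<Longrightarrow> b \<in> ?V' \<Longrightarrow> a \<noteq> b \<Longrightarrow> {a,b} \<subseteq> ?V' \<and> card {a,b} = 2"
      by simp
    have mem: "v1 \<in> ?V'" "v2 \<in> ?V'" "v3 \<in> ?V'" "x1 \<in> ?V'" "x2 \<in> ?V'" "x3 \<in> ?V'"
      unfolding TV_eq using fa by auto
    show ?thesis using cs
    proof cases
      case 1
      then show ?thesis using wf unfolding wfg_def triangle_replace_V_def by blast
    next
      case 2 then show ?thesis using h[OF mem(1) mem(2) m(11)] by simp
    next
      case 3 then show ?thesis using h[OF mem(2) mem(3) m(12)] by simp
    next
      case 4 then show ?thesis using h[OF mem(3) mem(1)] m(13) by auto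
    next
      case 5 then show ?thesis using h[OF mem(1) mem(4) m(1)] by simp
    next
      case 6 then show ?thesis using h[OF mem(2) mem(5) m(5)] by simp
    next
      case 7 then show ?thesis using h[OF mem(3) mem(6) m(9)] by simp
    qed
    qed
    qed
  qed
  have B: "\<forall>v\<in>?V'. \<exists>F. v_join ?V' ?E' v F"
  proof
  fix v assume v: "v \<in> ?V'"
  then consider "v \<in> V - {w}" | "v = v1" | "v = v2" | "v = v3" unfolding TV_eq by blast
  then show "\<exists>F. v_join ?V' ?E' v F"
  proof cases
    case 1
    obtain F where F: "v_join V E v F" using IV 1 by blast
    then have FE: "F \<subseteq> E" and dv: "graph_deg F v = 3" and du: "\<forall>u\<in>V-{v}. graph_deg F u = 1"
      by (auto simp: v_join_def)
    have dw: "graph_deg F w = 1" using du 1 m by auto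
    obtain F' where F': "F' \<subseteq> ?E'" "\<forall>u\<in>V-{w}. graph_deg F' u = graph_deg F u"
      "\<forall>u\<in>{v1,v2,v3}. graph_deg F' u = 1"
      using S1gen[OF st FE dw] by blast
    have a1: "graph_deg F' v = 3" using F'(2) dv 1 by simp
    have a2: "\<forall>u\<in>?V' - {v}. graph_deg F' u = 1"
    proof
      fix u assume u: "u \<in> ?V' - {v}"
      then consider "u \<in> V - {w}" | "u \<in> {v1,v2,v3}" unfolding TV_eq by blast
      then show "graph_deg F' u = 1"
      proof cases
        case 1
        then have "graph_deg F' u = graph_deg F u" using F'(2) by blast
        moreover have "graph_deg F u = 1" using du 1 u by blast
        ultimately show ?thesis by simp
      next
        case 2 then show ?thesis using F'(3) by blast
      qed
    qed
    have "v_join ?V' ?E' v F'" unfolding v_join_def using F'(1) a1 a2 by blast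
    then show ?thesis by blast
  next
    case 2
    obtain M where "pm V E M" "{w,x1} \<in> M" using IE fa by blast
    then show ?thesis using S2[OF st] 2 by blast
  next
    case 3
    obtain M where "pm V E M" "{w,x2} \<in> M" using IE fa by blast
    then show ?thesis using S2[OF st1] 3 unfolding tv1 te1 by blast
  next
    case 4
    obtain M where "pm V E M" "{w,x3} \<in> M" using IE fa by blast
    then show ?thesis using S2[OF st2] 4 unfolding tv2 te2 by blast
  qed
  qed
  have C: "\<forall>e\<in>?E'. \<exists>M. pm ?V' ?E' M \<and> e \<in> M"
  proof
  fix e assume "e \<in> ?E'"
  then consider "e \<in> E" "w \<notin> e" | "e = {v1,x1} \<or> e = {v2,v3}" | "e = {v2,x2} \<or> e = {v3,v1}"
      | "e = {v3,x3} \<or> e = {v1,v2}" unfolding triangle_replace_E_def by (elim UnE CollectE insertE emptyE) auto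
  then show "\<exists>M. pm ?V' ?E' M \<and> e \<in> M"
  proof cases
    case 1
    obtain M where M: "pm V E M" "e \<in> M" using IE 1 by blast
    then have ME: "M \<subseteq> E" and dM: "\<forall>u\<in>V. graph_deg M u = 1" by (auto simp: pm_def)
    have dw: "graph_deg M w = 1" using dM m by simp
    obtain F' where F': "F' \<subseteq> ?E'" "\<forall>u\<in>V-{w}. graph_deg F' u = graph_deg M u"
      "\<forall>u\<in>{v1,v2,v3}. graph_deg F' u = 1" "\<forall>e\<in>M. w \<notin> e \<longrightarrow> e \<in> F'"
      using S1gen[OF st ME dw] by blast
    have "pm ?V' ?E' F'" unfolding pm_def TV_eq using F' dM by auto
    moreover have "e \<in> F'" using F' M 1 by blast
    ultimately show ?thesis by blast
  next
    case 2
    obtain M where "pm V E M" "{w,x1} \<in> M" using IE fa by blast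
    then show ?thesis using pm_step[OF st] 2 by blast
  next
    case 3
    obtain M where "pm V E M" "{w,x2} \<in> M" using IE fa by blast
    then show ?thesis using pm_step[OF st1] 3 unfolding tv1 te1 by blast
  next
    case 4
    obtain M where "pm V E M" "{w,x3} \<in> M" using IE fa by blast
    then show ?thesis using pm_step[OF st2] 4 unfolding tv2 te2 by blast
  qed
  qed
  show ?thesis using A B C by blast
qed

lemma klee_inv:
  "klee_graph V E \<Longrightarrow> wfg V E \<and> (\<forall>v\<in>V. \<exists>F. v_join V E v F) \<and> (\<forall>e\<in>E. \<exists>M. pm V E M \<and> e \<in> M)"
proof (induction rule: klee_graph.induct)
  case (K4 V)
  then show ?case by (rule K4_inv)
next
  case (step V E w x1 x2 x3 v1 v2 v3)
  have st: "stepok V E w v1 v2 v3 x1 x2 x3" unfolding stepok_def using step by blast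
  have IV: "\<forall>v\<in>V. \<exists>F. v_join V E v F" using step.IH by blast
  have IE: "\<forall>e\<in>E. \<exists>M. pm V E M \<and> e \<in> M" using step.IH by blast
  show ?case by (rule step_inv[OF st IV IE])
qed

theorem mainTheorem6:
  fixes V :: "'a set" and E :: "'a set set" and v :: 'a
  assumes "klee_graph V E" and "v \<in> V"
  shows "\<exists>F. v_join V E v F"
  using klee_inv[OF assms(1)] assms(2) by blast

end
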